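(* Let $(G,u)$ be a unital po-group and $m:G\to\mathbb R$ a group homomorphism (signed measure on $G$). Then $m$ is relatively bounded if and only if $m$ is bounded on the interval $[0,nu]=\{g\in G:0\le g\le nu\}$ for every integer $n\ge1$. If, in addition, $G$ satisfies (RDP), then $m$ is relatively bounded if and only if $m$ is bounded on $[0,u]$.
   Context: A po-group is a (not necessarily Abelian) group $G$ with a partial order $\le$ such that $a\le b$ implies $x+a+y\le x+b+y$ for all $x,y$; $G^+$ is its positive cone. An element $u\in G^+$ is a strong unit if for every $g\in G$ there is $n\ge1$ with $g\le nu$; $(G,u)$ is then a unital po-group. A map $m:G\to\mathbb R$ is relatively bounded if for every subset $W\subseteq G$ bounded above and below in $G$, the set $m(W)$ is bounded in $\mathbb R$. $G$ satisfies (RDP) if for all $a_1,a_2,b_1,b_2\in G^+$ with $a_1+a_2=b_1+b_2$ there exist $d_1,d_2,d_3,d_4\in G^+$ with $d_1+d_2=a_1$, $d_3+d_4=a_2$, $d_1+d_3=b_1$, $d_2+d_4=b_2$. *)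

theory Defs
  imports Main "HOL-Library.Lattice_Algebras" Complex_Main
begin

definition po_group :: "('a::group_add \<Rightarrow> 'a \<Rightarrow> bool) \<Rightarrow> bool" where
  "po_group le \<longleftrightarrow>
     (\<forall>a. le a a) \<and>
     (\<forall>a b. le a b \<and> le b a \<longrightarrow> a = b) \<and>
     (\<forall>a b c. le a b \<and> le b c \<longrightarrow> le a c) \<and>
     (\<forall>a b x y. le a b \<longrightarrow> le (x + a + y) (x + b + y))"

primrec nmul :: "nat \<Rightarrow> 'a::monoid_add \<Rightarrow> 'a" where
  "nmul 0 u = 0"
| "nmul (Suc n) u = nmul n u + u"

definition strong_unit :: "('a::group_add \<Rightarrow> 'a \<Rightarrow> bool) \<Rightarrow> 'a \<Rightarrow> bool" where
  "strong_unit le u \<longleftrightarrow> le 0 u \<and> (\<forall>g. \<exists>n\<ge>1. le g (nmul n u))"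

definition unital_po_group :: "('a::group_add \<Rightarrow> 'a \<Rightarrow> bool) \<Rightarrow> 'a \<Rightarrow> bool" where
  "unital_po_group le u \<longleftrightarrow> po_group le \<and> strong_unit le u"

definition group_hom_real :: "('a::group_add \<Rightarrow> real) \<Rightarrow> bool" where
  "group_hom_real m \<longleftrightarrow> (\<forall>a b. m (a + b) = m a + m b)"

definition bdd_real_set :: "real set \<Rightarrow> bool" where
  "bdd_real_set S \<longleftrightarrow> bdd_above S \<and> bdd_below S"

definition relatively_bounded :: "('a::group_add \<Rightarrow> 'a \<Rightarrow> bool) \<Rightarrow> ('a \<Rightarrow> real) \<Rightarrow> bool" where
  "relatively_bounded le m \<longleftrightarrow>
     (\<forall>W. (\<exists>a b. \<forall>w\<in>W. le a w \<and> le w b) \<longrightarrow> bdd_real_set (m ` W))"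

definition po_interval :: "('a::group_add \<Rightarrow> 'a \<Rightarrow> bool) \<Rightarrow> 'a \<Rightarrow> 'a \<Rightarrow> 'a set" where
  "po_interval le a b = {g. le a g \<and> le g b}"

definition RDP :: "('a::group_add \<Rightarrow> 'a \<Rightarrow> bool) \<Rightarrow> bool" where
  "RDP le \<longleftrightarrow>
     (\<forall>a1 a2 b1 b2. le 0 a1 \<and> le 0 a2 \<and> le 0 b1 \<and> le 0 b2 \<and> a1 + a2 = b1 + b2 \<longrightarrow>
        (\<exists>d1 d2 d3 d4. le 0 d1 \<and> le 0 d2 \<and> le 0 d3 \<and> le 0 d4 \<and>
           d1 + d2 = a1 \<and> d3 + d4 = a2 \<and> d1 + d3 = b1 \<and> d2 + d4 = b2))"

end

theory Submission
  imports Defs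
begin

lemma bdd_abs: "bdd_real_set S \<longleftrightarrow> (\<exists>C. \<forall>x\<in>S. \<bar>x\<bar> \<le> C)"
  unfolding bdd_real_set_def bdd_above_def bdd_below_def
proof
  assume "(\<exists>M. \<forall>x\<in>S. x \<le> M) \<and> (\<exists>M. \<forall>x\<in>S. M \<le> x)"
  then obtain A B where "\<forall>x\<in>S. x \<le> A" "\<forall>x\<in>S. B \<le> x" by blast
  then have "\<forall>x\<in>S. \<bar>x\<bar> \<le> \<bar>A\<bar> + \<bar>B\<bar>" by force
  then show "\<exists>C. \<forall>x\<in>S. \<bar>x\<bar> \<le> C" by blast
next
  assume "\<exists>C. \<forall>x\<in>S. \<bar>x\<bar> \<le> C"
  then obtain C where "\<forall>x\<in>S. \<bar>x\<bar> \<le> C" by blast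
  then have "\<forall>x\<in>S. x \<le> C" "\<forall>x\<in>S. -C \<le> x" by force+
  then show "(\<exists>M. \<forall>x\<in>S. x \<le> M) \<and> (\<exists>M. \<forall>x\<in>S. M \<le> x)" by blast
qed

lemma hom_facts:
  assumes "group_hom_real m"
  shows "m 0 = 0" "m (-a) = - m a" "m (a + b) = m a + m b"
proof -
  have h: "\<And>a b. m (a + b) = m a + m b" using assms unfolding group_hom_real_def by blast
  show z: "m 0 = 0" using h[of 0 0] by simp
  show "m (-a) = - m a" using h[of a "-a"] z by simp
  show "m (a + b) = m a + m b" by (rule h)
qed

lemma rb_int:
  assumes "relatively_bounded le m"
  shows "bdd_real_set (m ` po_interval le a b)"
proof -
  have "\<exists>c d. \<forall>w\<in>po_interval le a b. le c w \<and> le w d"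
    by (rule exI[of _ a], rule exI[of _ b]) (simp add: po_interval_def)
  then show ?thesis using assms unfolding relatively_bounded_def by blast
qed

theorem lemma3p2:
  fixes le :: "'a::group_add \<Rightarrow> 'a \<Rightarrow> bool" and u :: 'a and m :: "'a \<Rightarrow> real"
  assumes "unital_po_group le u"
    and "group_hom_real m"
  shows "(relatively_bounded le m \<longleftrightarrow>
            (\<forall>n::nat. n \<ge> 1 \<longrightarrow> bdd_real_set (m ` po_interval le 0 (nmul n u))))
       \<and> (RDP le \<longrightarrow>
            (relatively_bounded le m \<longleftrightarrow> bdd_real_set (m ` po_interval le 0 u)))"
proof -
  have po: "po_group le" and su: "strong_unit le u"
    using assms(1) unfolding unital_po_group_def by auto
  have refl: "\<And>a. le a a" using po unfolding po_group_def by blast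
  have antis: "\<And>a b. le a b \<Longrightarrow> le b a \<Longrightarrow> a = b" using po unfolding po_group_def by blast
  have trans: "\<And>a b c. le a b \<Longrightarrow> le b c \<Longrightarrow> le a c" using po unfolding po_group_def by blast
  have mono: "\<And>a b x y. le a b \<Longrightarrow> le (x + a + y) (x + b + y)" using po unfolding po_group_def by blast
  have u0: "le 0 u" and unit: "\<And>g. \<exists>n\<ge>1. le g (nmul n u)" using su unfolding strong_unit_def by auto
  have m0: "m 0 = 0" and mneg: "\<And>a. m (-a) = - m a" and madd: "\<And>a b. m (a + b) = m a + m b"
    using hom_facts[OF assms(2)] by auto
  have P1: "relatively_bounded le m \<longleftrightarrow>
            (\<forall>n::nat. n \<ge> 1 \<longrightarrow> bdd_real_set (m ` po_interval le 0 (nmul n u)))"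
  proof
    assume "relatively_bounded le m"
    then show "\<forall>n::nat. n \<ge> 1 \<longrightarrow> bdd_real_set (m ` po_interval le 0 (nmul n u))"
      using rb_int by blast
  next
    assume R: "\<forall>n::nat. n \<ge> 1 \<longrightarrow> bdd_real_set (m ` po_interval le 0 (nmul n u))"
    show "relatively_bounded le m"
      unfolding relatively_bounded_def
    proof (intro allI impI)
      fix W assume "\<exists>a b. \<forall>w\<in>W. le a w \<and> le w b"
      then obtain a b where ab: "\<And>w. w \<in> W \<Longrightarrow> le a w \<and> le w b" by blast
      obtain N where N: "N \<ge> 1" "le (b + -a) (nmul N u)" using unit by blast
      from R N(1) obtain C where C: "\<And>x. x \<in> po_interval le 0 (nmul N u) \<Longrightarrow> \<bar>m x\<bar> \<le> C"
        unfolding bdd_abs by blast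
      have "\<forall>w\<in>W. \<bar>m w\<bar> \<le> C + \<bar>m a\<bar>"
      proof
        fix w assume w: "w \<in> W"
        have "le (0 + a + -a) (0 + w + -a)" using mono ab[OF w] by blast
        then have l1: "le 0 (w + -a)" by simp
        have "le (0 + w + -a) (0 + b + -a)" using mono ab[OF w] by blast
        then have "le (w + -a) (nmul N u)" using N(2) trans by simp
        with l1 have "\<bar>m (w + -a)\<bar> \<le> C" using C unfolding po_interval_def by blast
        moreover have "m w = m (w + -a) + m a"
          using madd[of "w + -a" a] by (simp add: add.assoc)
        ultimately show "\<bar>m w\<bar> \<le> C + \<bar>m a\<bar>" by linarith
      qed
      then show "bdd_real_set (m ` W)" unfolding bdd_abs by blast
    qed
  qed
  have P2: "RDP le \<longrightarrow> (relatively_bounded le m \<longleftrightarrow> bdd_real_set (m ` po_interval le 0 u))"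
  proof (intro impI iffI)
    assume "relatively_bounded le m"
    then show "bdd_real_set (m ` po_interval le 0 u)"
      using rb_int by blast
  next
    assume rdp: "RDP le" and B: "bdd_real_set (m ` po_interval le 0 u)"
    from B obtain C where C: "\<And>x. le 0 x \<Longrightarrow> le x u \<Longrightarrow> \<bar>m x\<bar> \<le> C"
      unfolding bdd_abs po_interval_def by blast
    have riesz: "\<exists>x1 x2. x = x1 + x2 \<and> le 0 x1 \<and> le x1 y1 \<and> le 0 x2 \<and> le x2 y2"
      if hx: "le 0 x" "le x (y1 + y2)" "le 0 y1" "le 0 y2" for x y1 y2
    proof -
      have "le (-x + x + 0) (-x + (y1 + y2) + 0)" using mono hx(2) by blast
      then have z: "le 0 (-x + (y1 + y2))" by simp
      have eq: "x + (-x + (y1 + y2)) = y1 + y2" by (simp add: add.assoc[symmetric])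
      obtain d1 d2 d3 d4 where d: "le 0 d1" "le 0 d2" "le 0 d3" "le 0 d4"
        "d1 + d2 = x" "d1 + d3 = y1" "d2 + d4 = y2"
        using rdp[unfolded RDP_def, rule_format, OF conjI[OF hx(1) conjI[OF z conjI[OF hx(3) conjI[OF hx(4) eq]]]]] 
        by blast
      have "le (d1 + 0 + 0) (d1 + d3 + 0)" using mono d(3) by blast
      then have "le d1 y1" using d by simp
      moreover have "le (d2 + 0 + 0) (d2 + d4 + 0)" using mono d(4) by blast
      then have "le d2 y2" using d by simp
      ultimately show ?thesis using d(1,2,5) by blast
    qed
    have nn: "le 0 (nmul n u)" for n
    proof (induction n)
      case 0 then show ?case using refl by simp
    next
      case (Suc n)
      have "le (0 + 0 + 0) (0 + nmul n u + 0)" using mono Suc by blast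
      moreover have "le (nmul n u + 0 + 0) (nmul n u + u + 0)" using mono u0 by blast
      ultimately show ?case using trans by simp
    qed
    have bnd: "\<forall>x. le 0 x \<longrightarrow> le x (nmul n u) \<longrightarrow> \<bar>m x\<bar> \<le> real n * C" for n
    proof (induction n)
      case 0
      show ?case
      proof (intro allI impI)
        fix x assume "le 0 x" "le x (nmul 0 u)"
        then have "le x 0" by simp
        then have "x = 0" using antis \<open>le 0 x\<close> by blast
        then show "\<bar>m x\<bar> \<le> real 0 * C" using m0 by simp
      qed
    next
      case (Suc n)
      show ?case
      proof (intro allI impI)
        fix x assume x: "le 0 x" "le x (nmul (Suc n) u)"
        then obtain x1 x2 where xs: "x = x1 + x2" "le 0 x1" "le x1 (nmul n u)" "le 0 x2" "le x2 u"
          using riesz[of x "nmul n u" u] nn u0 by auto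
        have "\<bar>m x1\<bar> \<le> real n * C" using Suc xs by blast
        moreover have "\<bar>m x2\<bar> \<le> C" using C xs by blast
        moreover have "m x = m x1 + m x2" using xs madd by simp
        ultimately show "\<bar>m x\<bar> \<le> real (Suc n) * C" by (simp add: algebra_simps)
      qed
    qed
    have "\<forall>n::nat. n \<ge> 1 \<longrightarrow> bdd_real_set (m ` po_interval le 0 (nmul n u))"
      unfolding bdd_abs po_interval_def using bnd by blast
    then show "relatively_bounded le m" using P1 by blast
  qed
  show ?thesis using P1 P2 by blast
qed

end
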